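(* Let $A$, $c$ be as in the context. If the system $yA\le c$ is totally dual integral, then $IP_{A,c}$ is a Gomory family.
   Context: $A\in\mathbb Z^{d\times n}$ has rank $d$, columns $a_1,\dots,a_n$, $cone(A)$ pointed, $\{x\in\mathbb R^n_{\ge0}:Ax=0\}=\{0\}$, $\mathbb ZA=\mathbb Z^d$, $\mathbb NA=\{Au:u\in\mathbb N^n\}$. For $c\in\mathbb Z^n$ and $b\in\mathbb NA$, $IP_{A,c}(b)=\min\{c\cdot x: Ax=b,\ x\in\mathbb N^n\}$; $IP_{A,c}$ is the family of these programs; for $b\in cone(A)$, $LP_{A,c}(b)=\min\{c\cdot x:Ax=b,\ x\ge0\}$. The system $yA\le c$ is totally dual integral if $LP_{A,c}(b)$ has an integral optimal solution for every $b\in cone(A)\cap\mathbb Z^d$. The regular triangulation $\Delta_c$ is the simplicial complex of all $\sigma\subseteq\{1,\dots,n\}$ for which some $y\in\mathbb R^d$ has $y\cdot a_j=c_j$ ($j\in\sigma$), $y\cdot a_j<c_j$ ($j\notin\sigma$). $c$ is generic: $\Delta_c$ is a triangulation and every $IP_{A,c}(b)$ has a unique optimal solution. For a maximal face $\sigma$ let $\tilde c_{\bar\sigma}=c_{\bar\sigma}-c_\sigma A_\sigma^{-1}A_{\bar\sigma}$; the (Gomory) group relaxation $G^\sigma(b)$ is $\min\{\tilde c_{\bar\sigma}\cdot x_{\bar\sigma}: A_\sigma x_\sigma+A_{\bar\sigma}x_{\bar\sigma}=b,\ x_{\bar\sigma}\ge0,\ x\in\mathbb Z^n\}$, and it solves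 $IP_{A,c}(b)$ if its optimal solution is non-negative. $IP_{A,c}$ is a Gomory family if for every $b\in\mathbb NA$ there is a maximal face $\sigma$ of $\Delta_c$ such that $G^\sigma(b)$ solves $IP_{A,c}(b)$. *)

theory Defs
  imports Complex_Main
begin

text \<open>The matrix A in Z^(d x n) is a function A :: nat => nat => int,
  with entries A i j for i < d, j < n; column j is a_j.  Vectors in R^n / Z^n / N^n
  are functions nat => _ supported on {..<n} (required explicitly where it matters);
  right-hand sides b are functions nat => _ of which only the coordinates i < d matter.\<close>

definition col_dot :: "(nat \<Rightarrow> nat \<Rightarrow> int) \<Rightarrow> nat \<Rightarrow> (nat \<Rightarrow> real) \<Rightarrow> nat \<Rightarrow> real" where
  "col_dot A d y j = (\<Sum>i<d. y i * of_int (A i j))"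

definition full_row_rank :: "(nat \<Rightarrow> nat \<Rightarrow> int) \<Rightarrow> nat \<Rightarrow> nat \<Rightarrow> bool" where
  "full_row_rank A d n \<longleftrightarrow> (\<forall>y. (\<forall>j<n. col_dot A d y j = 0) \<longrightarrow> (\<forall>i<d. y i = 0))"

definition ip_feasible :: "(nat \<Rightarrow> nat \<Rightarrow> int) \<Rightarrow> nat \<Rightarrow> nat \<Rightarrow> (nat \<Rightarrow> int) \<Rightarrow> (nat \<Rightarrow> nat) \<Rightarrow> bool" where
  "ip_feasible A d n b x \<longleftrightarrow> (\<forall>j\<ge>n. x j = 0) \<and> (\<forall>i<d. (\<Sum>j<n. A i j * int (x j)) = b i)"

definition ip_optimal :: "(nat \<Rightarrow> nat \<Rightarrow> int) \<Rightarrow> (nat \<Rightarrow> int) \<Rightarrow> nat \<Rightarrow> nat \<Rightarrow> (nat \<Rightarrow> int) \<Rightarrow> (nat \<Rightarrow> nat) \<Rightarrow> bool" where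
  "ip_optimal A c d n b x \<longleftrightarrow> ip_feasible A d n b x \<and>
     (\<forall>x'. ip_feasible A d n b x' \<longrightarrow> (\<Sum>j<n. c j * int (x j)) \<le> (\<Sum>j<n. c j * int (x' j)))"

definition NA :: "(nat \<Rightarrow> nat \<Rightarrow> int) \<Rightarrow> nat \<Rightarrow> nat \<Rightarrow> (nat \<Rightarrow> int) set" where
  "NA A d n = {b. \<exists>u. ip_feasible A d n b u}"

definition lp_feasible :: "(nat \<Rightarrow> nat \<Rightarrow> int) \<Rightarrow> nat \<Rightarrow> nat \<Rightarrow> (nat \<Rightarrow> real) \<Rightarrow> (nat \<Rightarrow> real) \<Rightarrow> bool" where
  "lp_feasible A d n b x \<longleftrightarrow> (\<forall>j\<ge>n. x j = 0) \<and> (\<forall>j<n. x j \<ge> 0) \<and>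
     (\<forall>i<d. (\<Sum>j<n. of_int (A i j) * x j) = b i)"

definition lp_optimal :: "(nat \<Rightarrow> nat \<Rightarrow> int) \<Rightarrow> (nat \<Rightarrow> int) \<Rightarrow> nat \<Rightarrow> nat \<Rightarrow> (nat \<Rightarrow> real) \<Rightarrow> (nat \<Rightarrow> real) \<Rightarrow> bool" where
  "lp_optimal A c d n b x \<longleftrightarrow> lp_feasible A d n b x \<and>
     (\<forall>x'. lp_feasible A d n b x' \<longrightarrow> (\<Sum>j<n. of_int (c j) * x j) \<le> (\<Sum>j<n. of_int (c j) * x' j))"

definition coneA :: "(nat \<Rightarrow> nat \<Rightarrow> int) \<Rightarrow> nat \<Rightarrow> nat \<Rightarrow> (nat \<Rightarrow> real) set" where
  "coneA A d n = {b. \<exists>x. lp_feasible A d n b x}"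

definition pointed_cone :: "(nat \<Rightarrow> nat \<Rightarrow> int) \<Rightarrow> nat \<Rightarrow> nat \<Rightarrow> bool" where
  "pointed_cone A d n \<longleftrightarrow>
     (\<forall>b. b \<in> coneA A d n \<and> (\<lambda>i. - b i) \<in> coneA A d n \<longrightarrow> (\<forall>i<d. b i = 0))"

definition TDI :: "(nat \<Rightarrow> nat \<Rightarrow> int) \<Rightarrow> (nat \<Rightarrow> int) \<Rightarrow> nat \<Rightarrow> nat \<Rightarrow> bool" where
  "TDI A c d n \<longleftrightarrow>
     (\<forall>b::nat \<Rightarrow> int. (\<lambda>i. real_of_int (b i)) \<in> coneA A d n \<longrightarrow>
        (\<exists>x. lp_optimal A c d n (\<lambda>i. real_of_int (b i)) x \<and> (\<forall>j. x j \<in> \<int>)))"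

definition regular_subdivision :: "(nat \<Rightarrow> nat \<Rightarrow> int) \<Rightarrow> (nat \<Rightarrow> int) \<Rightarrow> nat \<Rightarrow> nat \<Rightarrow> nat set set" where
  "regular_subdivision A c d n =
     {\<sigma>. \<sigma> \<subseteq> {..<n} \<and> (\<exists>y. (\<forall>j\<in>\<sigma>. col_dot A d y j = of_int (c j)) \<and>
                              (\<forall>j\<in>{..<n} - \<sigma>. col_dot A d y j < of_int (c j)))}"

definition cols_lin_indep :: "(nat \<Rightarrow> nat \<Rightarrow> int) \<Rightarrow> nat \<Rightarrow> nat set \<Rightarrow> bool" where
  "cols_lin_indep A d \<sigma> \<longleftrightarrow>
     (\<forall>w::nat \<Rightarrow> real. (\<forall>i<d. (\<Sum>j\<in>\<sigma>. w j * of_int (A i j)) = 0) \<longrightarrow> (\<forall>j\<in>\<sigma>. w j = 0))"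

definition is_triangulation :: "(nat \<Rightarrow> nat \<Rightarrow> int) \<Rightarrow> (nat \<Rightarrow> int) \<Rightarrow> nat \<Rightarrow> nat \<Rightarrow> bool" where
  "is_triangulation A c d n \<longleftrightarrow> (\<forall>\<sigma>\<in>regular_subdivision A c d n. cols_lin_indep A d \<sigma>)"

definition generic_cost :: "(nat \<Rightarrow> nat \<Rightarrow> int) \<Rightarrow> (nat \<Rightarrow> int) \<Rightarrow> nat \<Rightarrow> nat \<Rightarrow> bool" where
  "generic_cost A c d n \<longleftrightarrow> is_triangulation A c d n \<and>
     (\<forall>b\<in>NA A d n. \<exists>!x. ip_optimal A c d n b x)"

definition maximal_face :: "(nat \<Rightarrow> nat \<Rightarrow> int) \<Rightarrow> (nat \<Rightarrow> int) \<Rightarrow> nat \<Rightarrow> nat \<Rightarrow> nat set \<Rightarrow> bool" where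
  "maximal_face A c d n \<sigma> \<longleftrightarrow> \<sigma> \<in> regular_subdivision A c d n \<and>
     (\<forall>\<tau>\<in>regular_subdivision A c d n. \<sigma> \<subseteq> \<tau> \<longrightarrow> \<tau> = \<sigma>)"

(* c_sigma A_sigma^{-1}: the unique y in R^d with y a_j = c_j for j in sigma *)
definition dual_point :: "(nat \<Rightarrow> nat \<Rightarrow> int) \<Rightarrow> (nat \<Rightarrow> int) \<Rightarrow> nat \<Rightarrow> nat set \<Rightarrow> nat \<Rightarrow> real" where
  "dual_point A c d \<sigma> = (THE y. (\<forall>i\<ge>d. y i = 0) \<and> (\<forall>j\<in>\<sigma>. col_dot A d y j = of_int (c j)))"

definition reduced_cost :: "(nat \<Rightarrow> nat \<Rightarrow> int) \<Rightarrow> (nat \<Rightarrow> int) \<Rightarrow> nat \<Rightarrow> nat set \<Rightarrow> nat \<Rightarrow> real" where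
  "reduced_cost A c d \<sigma> j = of_int (c j) - col_dot A d (dual_point A c d \<sigma>) j"

definition group_feasible :: "(nat \<Rightarrow> nat \<Rightarrow> int) \<Rightarrow> nat \<Rightarrow> nat \<Rightarrow> nat set \<Rightarrow> (nat \<Rightarrow> int) \<Rightarrow> (nat \<Rightarrow> int) \<Rightarrow> bool" where
  "group_feasible A d n \<sigma> b x \<longleftrightarrow> (\<forall>j\<ge>n. x j = 0) \<and> (\<forall>j\<in>{..<n} - \<sigma>. x j \<ge> 0) \<and>
     (\<forall>i<d. (\<Sum>j<n. A i j * x j) = b i)"

definition group_optimal :: "(nat \<Rightarrow> nat \<Rightarrow> int) \<Rightarrow> (nat \<Rightarrow> int) \<Rightarrow> nat \<Rightarrow> nat \<Rightarrow> nat set \<Rightarrow> (nat \<Rightarrow> int) \<Rightarrow> (nat \<Rightarrow> int) \<Rightarrow> bool" where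
  "group_optimal A c d n \<sigma> b x \<longleftrightarrow> group_feasible A d n \<sigma> b x \<and>
     (\<forall>x'. group_feasible A d n \<sigma> b x' \<longrightarrow>
        (\<Sum>j\<in>{..<n} - \<sigma>. reduced_cost A c d \<sigma> j * of_int (x j))
          \<le> (\<Sum>j\<in>{..<n} - \<sigma>. reduced_cost A c d \<sigma> j * of_int (x' j)))"

(* G^sigma(b) solves IP_{A,c}(b): its optimal solution is non-negative *)
definition group_solves :: "(nat \<Rightarrow> nat \<Rightarrow> int) \<Rightarrow> (nat \<Rightarrow> int) \<Rightarrow> nat \<Rightarrow> nat \<Rightarrow> nat set \<Rightarrow> (nat \<Rightarrow> int) \<Rightarrow> bool" where
  "group_solves A c d n \<sigma> b \<longleftrightarrow> (\<exists>x. group_optimal A c d n \<sigma> b x \<and> (\<forall>j. x j \<ge> 0))"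

definition gomory_family :: "(nat \<Rightarrow> nat \<Rightarrow> int) \<Rightarrow> (nat \<Rightarrow> int) \<Rightarrow> nat \<Rightarrow> nat \<Rightarrow> bool" where
  "gomory_family A c d n \<longleftrightarrow>
     (\<forall>b\<in>NA A d n. \<exists>\<sigma>. maximal_face A c d n \<sigma> \<and> group_solves A c d n \<sigma> b)"

end

theory Submission
  imports Defs
begin


definition vdot :: "nat \<Rightarrow> (nat \<Rightarrow> real) \<Rightarrow> (nat \<Rightarrow> real) \<Rightarrow> real" where
  "vdot D y v = (\<Sum>i<D. y i * v i)"

lemma vdot_lin2: "vdot D y (\<lambda>i. p * u i - q * v i) = p * vdot D y u - q * vdot D y v"
  unfolding vdot_def by (simp add: algebra_simps sum_subtractf sum_distrib_left)

lemma vdot_lin1: "vdot D (\<lambda>i. z i - r * y i) v = vdot D z v - r * vdot D y v"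
  unfolding vdot_def by (simp add: algebra_simps sum_subtractf sum_distrib_left)

lemma vdot_self_pos: assumes "i < D" "b i \<noteq> 0" shows "vdot D b b > 0"
proof -
  have "vdot D b b = (\<Sum>i<D. b i * b i)" by (simp add: vdot_def)
  also have "\<dots> \<ge> b i * b i" using assms
    by (intro member_le_sum) auto
  moreover have "b i * b i > 0" using assms(2) by (metis not_real_square_gt_zero)
  ultimately show ?thesis by linarith
qed

lemma farkas:
  fixes a :: "nat \<Rightarrow> nat \<Rightarrow> real"
  assumes "finite J"
  shows "(\<exists>l. (\<forall>j\<in>J. l j \<ge> 0) \<and> (\<forall>i<D. b i = (\<Sum>j\<in>J. l j * a j i)))
       \<or> (\<exists>y. (\<forall>j\<in>J. vdot D y (a j) \<le> 0) \<and> vdot D y b > 0)"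
  using assms
proof (induction J arbitrary: a b rule: finite_induct)
  case empty
  show ?case
  proof (cases "\<forall>i<D. b i = 0")
    case True then show ?thesis by auto
  next
    case False
    then obtain i where "i < D" "b i \<noteq> 0" by auto
    then show ?thesis using vdot_self_pos by blast
  qed
next
  case (insert m J)
  from insert.IH[of b a] show ?case
  proof
    assume "\<exists>l. (\<forall>j\<in>J. l j \<ge> 0) \<and> (\<forall>i<D. b i = (\<Sum>j\<in>J. l j * a j i))"
    then obtain l where l: "\<forall>j\<in>J. l j \<ge> 0" "\<forall>i<D. b i = (\<Sum>j\<in>J. l j * a j i)" by blast
    have e: "(\<Sum>j\<in>J. (l(m:=0)) j * a j i) = (\<Sum>j\<in>J. l j * a j i)" for i
      using insert.hyps by (intro sum.cong) auto
    have "\<forall>j\<in>insert m J. (l(m:=0)) j \<ge> 0" using l by auto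
    moreover have "\<forall>i<D. b i = (\<Sum>j\<in>insert m J. (l(m:=0)) j * a j i)"
      using l insert.hyps e by (simp add: sum.insert)
    ultimately show ?thesis by blast
  next
    assume "\<exists>y. (\<forall>j\<in>J. vdot D y (a j) \<le> 0) \<and> vdot D y b > 0"
    then obtain y where y: "\<forall>j\<in>J. vdot D y (a j) \<le> 0" "vdot D y b > 0" by blast
    show ?thesis
    proof (cases "vdot D y (a m) \<le> 0")
      case True
      then show ?thesis using y by auto
    next
      case False
      define p where "p = vdot D y (a m)"
      have p: "p > 0" using False p_def by simp
      define a' where "a' = (\<lambda>j i. p * a j i - vdot D y (a j) * a m i)"
      define b' where "b' = (\<lambda>i. p * b i - vdot D y b * a m i)"
      from insert.IH[of b' a'] show ?thesis
      proof
        assume "\<exists>l. (\<forall>j\<in>J. l j \<ge> 0) \<and> (\<forall>i<D. b' i = (\<Sum>j\<in>J. l j * a' j i))"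
        then obtain mu where mu: "\<forall>j\<in>J. mu j \<ge> 0" "\<forall>i<D. b' i = (\<Sum>j\<in>J. mu j * a' j i)" by blast
        define lm where "lm = (vdot D y b - (\<Sum>j\<in>J. mu j * vdot D y (a j))) / p"
        have "(\<Sum>j\<in>J. mu j * vdot D y (a j)) \<le> 0"
          using mu(1) y(1) by (intro sum_nonpos) (simp add: mult_nonneg_nonpos)
        then have lm0: "lm \<ge> 0" unfolding lm_def using p y(2) by simp
        define l where "l = mu(m := lm)"
        have "\<forall>j\<in>insert m J. l j \<ge> 0" using mu lm0 insert.hyps by (auto simp: l_def)
        moreover have "b i = (\<Sum>j\<in>insert m J. l j * a j i)" if "i < D" for i
        proof -
          have e1: "(\<Sum>j\<in>J. l j * a j i) = (\<Sum>j\<in>J. mu j * a j i)"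
            using insert.hyps by (intro sum.cong) (auto simp: l_def)
          have "p * b i - vdot D y b * a m i = (\<Sum>j\<in>J. mu j * (p * a j i - vdot D y (a j) * a m i))"
            using mu(2) that by (simp add: a'_def b'_def)
          also have "\<dots> = p * (\<Sum>j\<in>J. mu j * a j i) - (\<Sum>j\<in>J. mu j * vdot D y (a j)) * a m i"
            by (simp add: algebra_simps sum_subtractf sum_distrib_left sum_distrib_right)
          finally have E: "p * b i - vdot D y b * a m i = p * (\<Sum>j\<in>J. mu j * a j i) - (\<Sum>j\<in>J. mu j * vdot D y (a j)) * a m i" .
          have plm: "p * lm = vdot D y b - (\<Sum>j\<in>J. mu j * vdot D y (a j))"
            using p by (simp add: lm_def)
          have "p * lm * a m i = vdot D y b * a m i - (\<Sum>j\<in>J. mu j * vdot D y (a j)) * a m i"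
            using plm by (simp add: left_diff_distrib)
          with E have "p * b i = p * (\<Sum>j\<in>J. mu j * a j i) + p * lm * a m i"
            by linarith
          then have "b i = (\<Sum>j\<in>J. mu j * a j i) + lm * a m i"
            using p by (metis (no_types, lifting) distrib_left mult.assoc mult_left_cancel order_less_irrefl)
          then show ?thesis using insert.hyps e1 by (simp add: sum.insert l_def)
        qed
        ultimately show ?thesis by blast
      next
        assume "\<exists>z. (\<forall>j\<in>J. vdot D z (a' j) \<le> 0) \<and> vdot D z b' > 0"
        then obtain z where z: "\<forall>j\<in>J. vdot D z (a' j) \<le> 0" "vdot D z b' > 0" by blast
        define w where "w = (\<lambda>i. z i - (vdot D z (a m) / p) * y i)"
        have wa: "vdot D w v = vdot D z v - (vdot D z (a m) / p) * vdot D y v" for v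
          unfolding w_def by (rule vdot_lin1)
        have za': "vdot D z (a' j) = p * vdot D z (a j) - vdot D y (a j) * vdot D z (a m)" for j
          unfolding a'_def by (rule vdot_lin2)
        have zb': "vdot D z b' = p * vdot D z b - vdot D y b * vdot D z (a m)"
          unfolding b'_def by (rule vdot_lin2)
        have "vdot D w (a j) = vdot D z (a' j) / p" for j
          using p by (simp add: wa za' field_simps)
        moreover have "vdot D w b = vdot D z b' / p"
          using p by (simp add: wa zb' field_simps)
        moreover have "vdot D w (a m) = 0" using p by (simp add: wa p_def)
        ultimately have "(\<forall>j\<in>insert m J. vdot D w (a j) \<le> 0) \<and> vdot D w b > 0"
          using z p by (auto simp: divide_nonpos_pos)
        then show ?thesis by blast
      qed
    qed
  qed
qed


lemma compl_slack:
  assumes opt: "lp_optimal A c d n b x"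
  shows "\<exists>y. (\<forall>j<n. col_dot A d y j \<le> of_int (c j)) \<and> (\<forall>j<n. x j > 0 \<longrightarrow> col_dot A d y j = of_int (c j))"
proof -
  have feas: "lp_feasible A d n b x" using opt by (simp add: lp_optimal_def)
  define S where "S = {j. j < n \<and> x j > 0}"
  have finS: "finite S" and Sn: "S \<subseteq> {..<n}" by (auto simp: S_def)
  define gh :: "nat \<Rightarrow> nat \<Rightarrow> real" where "gh = (\<lambda>k i. if i < d then of_int (A i k) else - of_int (c k))"
  define g where "g = (\<lambda>k. if k < n then gh k else (\<lambda>i. - gh (k - n) i))"
  define J where "J = {..<n} \<union> (\<lambda>j. n + j) ` S"
  define e :: "nat \<Rightarrow> real" where "e = (\<lambda>i. if i = d then 1 else 0)"
  have finJ: "finite J" using finS by (simp add: J_def)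
  have vgh: "vdot (Suc d) y (gh k) = col_dot A d y k - y d * of_int (c k)" for y k
    by (simp add: vdot_def gh_def col_dot_def)
  have vneg: "vdot (Suc d) y (\<lambda>i. - u i) = - vdot (Suc d) y u" for y u
    by (simp add: vdot_def sum_negf)
  have ve: "vdot (Suc d) y e = y d" for y
    by (simp add: vdot_def e_def)
  from farkas[OF finJ, where D="Suc d" and b=e and a=g] show ?thesis
  proof
    assume "\<exists>y. (\<forall>j\<in>J. vdot (Suc d) y (g j) \<le> 0) \<and> vdot (Suc d) y e > 0"
    then obtain y where y: "\<forall>j\<in>J. vdot (Suc d) y (g j) \<le> 0" "y d > 0" using ve by auto
    define y' where "y' = (\<lambda>i. y i / y d)"
    have cy': "col_dot A d y' k = col_dot A d y k / y d" for k
      by (simp add: col_dot_def y'_def sum_divide_distrib)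
    have le: "col_dot A d y k \<le> y d * of_int (c k)" if "k < n" for k
      using y(1) that vgh[of y k] by (force simp: J_def g_def)
    have ge: "col_dot A d y k \<ge> y d * of_int (c k)" if "k \<in> S" for k
    proof -
      have "n + k \<in> J" using that by (simp add: J_def)
      then show ?thesis using y(1) vgh[of y k] vneg[of y "gh k"] by (force simp: g_def)
    qed
    have "\<forall>j<n. col_dot A d y' j \<le> of_int (c j)"
      using le y(2) by (simp add: cy' pos_divide_le_eq mult.commute)
    moreover have "\<forall>j<n. x j > 0 \<longrightarrow> col_dot A d y' j = of_int (c j)"
    proof (intro allI impI)
      fix j assume "j < n" "x j > 0"
      then have "j \<in> S" by (simp add: S_def)
      then have "col_dot A d y j = y d * of_int (c j)" using le ge \<open>j < n\<close> by (simp add: order_antisym)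
      then show "col_dot A d y' j = of_int (c j)" using y(2) by (simp add: cy')
    qed
    ultimately show ?thesis by blast
  next
    assume "\<exists>l. (\<forall>j\<in>J. l j \<ge> 0) \<and> (\<forall>i<Suc d. e i = (\<Sum>j\<in>J. l j * g j i))"
    then obtain l where l: "\<forall>j\<in>J. l j \<ge> 0" "\<forall>i<Suc d. e i = (\<Sum>j\<in>J. l j * g j i)" by blast
    define v where "v = (\<lambda>j. if j < n then l j - (if j \<in> S then l (n + j) else 0) else 0)"
    have sumJ: "(\<Sum>j\<in>J. l j * g j i) = (\<Sum>j<n. v j * gh j i)" for i
    proof -
      have disj: "{..<n} \<inter> (\<lambda>j. n + j) ` S = {}" by auto
      have "(\<Sum>j\<in>J. l j * g j i) = (\<Sum>j<n. l j * g j i) + (\<Sum>j\<in>(\<lambda>j. n + j) ` S. l j * g j i)"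
        unfolding J_def using finS by (intro sum.union_disjoint) auto
      also have "(\<Sum>j<n. l j * g j i) = (\<Sum>j<n. l j * gh j i)" by (simp add: g_def)
      also have "(\<Sum>j\<in>(\<lambda>j. n + j) ` S. l j * g j i) = (\<Sum>j\<in>S. l (n + j) * (- gh j i))"
        by (subst sum.reindex) (auto simp: g_def)
      also have "\<dots> = (\<Sum>j<n. (if j \<in> S then l (n + j) else 0) * (- gh j i))"
        using Sn by (intro sum.mono_neutral_cong_left) auto
      also have "(\<Sum>j<n. l j * gh j i) + (\<Sum>j<n. (if j \<in> S then l (n + j) else 0) * (- gh j i))
          = (\<Sum>j<n. v j * gh j i)"
        by (simp add: v_def sum.distrib[symmetric] algebra_simps sum_subtractf[symmetric])
      finally show ?thesis .
    qed
    have Av: "(\<Sum>j<n. of_int (A i j) * v j) = 0" if "i < d" for i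
    proof -
      have "e i = (\<Sum>j\<in>J. l j * g j i)" using l(2) that by simp
      then have "0 = (\<Sum>j<n. v j * gh j i)" using that sumJ[of i] by (simp add: e_def)
      also have "\<dots> = (\<Sum>j<n. of_int (A i j) * v j)" using that by (simp add: gh_def mult.commute)
      finally show ?thesis by simp
    qed
    have cv: "(\<Sum>j<n. of_int (c j) * v j) = -1"
    proof -
      have "e d = (\<Sum>j\<in>J. l j * g j d)" using l(2) by simp
      then have "1 = (\<Sum>j<n. v j * gh j d)" using sumJ[of d] by (simp add: e_def)
      also have "\<dots> = - (\<Sum>j<n. of_int (c j) * v j)" by (simp add: gh_def sum_negf mult.commute)
      finally show ?thesis by simp
    qed
    define eps where "eps = Min (insert 1 ((\<lambda>j. x j / (\<bar>v j\<bar> + 1)) ` S))"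
    have eps_pos: "eps > 0" unfolding eps_def using finS
      by (subst Min_gr_iff) (auto simp: S_def)
    have eps_le: "eps * \<bar>v j\<bar> \<le> x j" if "j \<in> S" for j
    proof -
      have "eps \<le> x j / (\<bar>v j\<bar> + 1)" unfolding eps_def using finS that by (intro Min_le) auto
      then have "eps * (\<bar>v j\<bar> + 1) \<le> x j" by (simp add: pos_le_divide_eq add_pos_nonneg)
      then show ?thesis using eps_pos by (simp add: algebra_simps)
    qed
    define x' where "x' = (\<lambda>j. x j + eps * v j)"
    have "lp_feasible A d n b x'"
      unfolding lp_feasible_def
    proof (intro conjI allI impI)
      fix j assume "n \<le> j" then show "x' j = 0" using feas by (simp add: x'_def v_def lp_feasible_def)
    next
      fix j assume j: "j < n"
      show "0 \<le> x' j"
      proof (cases "j \<in> S")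
        case True
        have "- (eps * v j) \<le> eps * \<bar>v j\<bar>" using eps_pos mult_left_mono[of "- v j" "\<bar>v j\<bar>" eps] by simp
        then show ?thesis using eps_le[OF True] by (simp add: x'_def)
      next
        case False
        then have "x j = 0" using feas j by (auto simp: S_def lp_feasible_def order_le_less)
        moreover have "v j \<ge> 0" using False j l(1) by (simp add: v_def J_def)
        ultimately show ?thesis using eps_pos by (simp add: x'_def)
      qed
    next
      fix i assume i: "i < d"
      have "(\<Sum>j<n. of_int (A i j) * x' j) = (\<Sum>j<n. of_int (A i j) * x j) + eps * (\<Sum>j<n. of_int (A i j) * v j)"
        by (simp add: x'_def algebra_simps sum.distrib sum_distrib_left)
      then show "(\<Sum>j<n. of_int (A i j) * x' j) = b i" using Av[OF i] feas i by (simp add: lp_feasible_def)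
    qed
    moreover have "(\<Sum>j<n. of_int (c j) * x' j) = (\<Sum>j<n. of_int (c j) * x j) - eps"
    proof -
      have "(\<Sum>j<n. of_int (c j) * x' j) = (\<Sum>j<n. of_int (c j) * x j) + eps * (\<Sum>j<n. of_int (c j) * v j)"
        by (simp add: x'_def algebra_simps sum.distrib sum_distrib_left)
      then show ?thesis using cv by simp
    qed
    ultimately show ?thesis using opt eps_pos unfolding lp_optimal_def by force
  qed
qed


lemma col_dot_add: "col_dot A d (\<lambda>i. y i + t * z i) j = col_dot A d y j + t * col_dot A d z j"
  by (simp add: col_dot_def algebra_simps sum.distrib sum_distrib_left)

lemma col_dot_diff: "col_dot A d (\<lambda>i. y i - z i) j = col_dot A d y j - col_dot A d z j"
  by (simp add: col_dot_def algebra_simps sum_subtractf)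

lemma col_dot_neg: "col_dot A d (\<lambda>i. - z i) j = - col_dot A d z j"
  by (simp add: col_dot_def sum_negf)

lemma col_dot_restrict: "col_dot A d (\<lambda>i. if i < d then y i else 0) j = col_dot A d y j"
  by (simp add: col_dot_def)

lemma face_of_y:
  assumes "\<forall>j<n. col_dot A d y j \<le> of_int (c j)"
  shows "{j. j < n \<and> col_dot A d y j = of_int (c j)} \<in> regular_subdivision A c d n"
  unfolding regular_subdivision_def using assms
  by (auto intro!: exI[of _ y] simp: order_less_le)

lemma exists_maximal:
  assumes "\<tau> \<in> regular_subdivision A c d n"
  shows "\<exists>\<sigma>. maximal_face A c d n \<sigma> \<and> \<tau> \<subseteq> \<sigma>"
proof -
  define F where "F = {\<sigma> \<in> regular_subdivision A c d n. \<tau> \<subseteq> \<sigma>}"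
  have "F \<subseteq> Pow {..<n}" by (auto simp: F_def regular_subdivision_def)
  then have finF: "finite F" by (rule finite_subset) simp
  have "\<tau> \<in> F" using assms by (simp add: F_def)
  then have "card ` F \<noteq> {}" by auto
  obtain \<sigma> where s: "\<sigma> \<in> F" "card \<sigma> = Max (card ` F)"
    using Max_in[OF finite_imageI[OF finF] \<open>card ` F \<noteq> {}\<close>] by auto
  have fin: "finite \<sigma>'" if "\<sigma>' \<in> F" for \<sigma>'
    using that by (auto simp: F_def regular_subdivision_def intro: finite_subset)
  have "maximal_face A c d n \<sigma>"
    unfolding maximal_face_def
  proof (intro conjI ballI impI)
    show "\<sigma> \<in> regular_subdivision A c d n" using s by (simp add: F_def)
  next
    fix \<tau>' assume t: "\<tau>' \<in> regular_subdivision A c d n" "\<sigma> \<subseteq> \<tau>'"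
    then have "\<tau>' \<in> F" using s by (auto simp: F_def)
    then have "card \<tau>' \<le> card \<sigma>" using s finF by simp
    then show "\<tau>' = \<sigma>" using card_seteq[OF fin[OF \<open>\<tau>' \<in> F\<close>] t(2)] by simp
  qed
  then show ?thesis using s by (auto simp: F_def)
qed

lemma maximal_no_pos_dir:
  assumes mf: "maximal_face A c d n \<sigma>"
    and z0: "\<forall>j\<in>\<sigma>. col_dot A d z j = 0"
    and j0: "j0 < n" "col_dot A d z j0 > 0"
  shows False
proof -
  have rs: "\<sigma> \<in> regular_subdivision A c d n" using mf by (simp add: maximal_face_def)
  then obtain y where sn: "\<sigma> \<subseteq> {..<n}" and y1: "\<forall>j\<in>\<sigma>. col_dot A d y j = of_int (c j)"
    and y2: "\<forall>j\<in>{..<n} - \<sigma>. col_dot A d y j < of_int (c j)"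
    by (auto simp: regular_subdivision_def)
  have j0s: "j0 \<notin> \<sigma>" using z0 j0 by auto
  define P where "P = {j. j < n \<and> j \<notin> \<sigma> \<and> col_dot A d z j > 0}"
  define r where "r = (\<lambda>j. (of_int (c j) - col_dot A d y j) / col_dot A d z j)"
  have finP: "finite P" by (simp add: P_def)
  have j0P: "j0 \<in> P" using j0 j0s by (simp add: P_def)
  then have Pne: "r ` P \<noteq> {}" by auto
  define t where "t = Min (r ` P)"
  obtain jm where jm: "jm \<in> P" "r jm = t"
    using Min_in[OF finite_imageI[OF finP] Pne] t_def by auto
  have rpos: "r j > 0" if "j \<in> P" for j
    using that y2 by (auto simp: P_def r_def)
  have tpos: "t > 0" using jm rpos by auto
  have tle: "t \<le> r j" if "j \<in> P" for j using that finP by (simp add: t_def)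
  define y' where "y' = (\<lambda>i. y i + t * z i)"
  have cy': "col_dot A d y' j = col_dot A d y j + t * col_dot A d z j" for j
    unfolding y'_def by (rule col_dot_add)
  have le: "col_dot A d y' j \<le> of_int (c j)" if "j < n" for j
  proof (cases "j \<in> \<sigma>")
    case True then show ?thesis using y1 z0 by (simp add: cy')
  next
    case False
    show ?thesis
    proof (cases "col_dot A d z j > 0")
      case True
      then have "j \<in> P" using False that by (simp add: P_def)
      then have "t \<le> r j" by (rule tle)
      then have "t * col_dot A d z j \<le> of_int (c j) - col_dot A d y j"
        using True by (simp add: r_def pos_le_divide_eq)
      then show ?thesis by (simp add: cy')
    next
      case nz: False
      then have "t * col_dot A d z j \<le> 0" using tpos by (simp add: mult_nonneg_nonpos)
      moreover have "col_dot A d y j < of_int (c j)" using y2 that False by simp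
      ultimately show ?thesis by (simp add: cy')
    qed
  qed
  define \<tau> where "\<tau> = {j. j < n \<and> col_dot A d y' j = of_int (c j)}"
  have "\<tau> \<in> regular_subdivision A c d n" unfolding \<tau>_def by (rule face_of_y) (use le in auto)
  moreover have "\<sigma> \<subseteq> \<tau>" using sn y1 z0 by (auto simp: \<tau>_def cy')
  moreover have "jm \<in> \<tau>"
  proof -
    have "col_dot A d z jm > 0" "jm < n" using jm by (auto simp: P_def)
    moreover have "t * col_dot A d z jm = of_int (c jm) - col_dot A d y jm"
    proof -
      have "t = (of_int (c jm) - col_dot A d y jm) / col_dot A d z jm" using jm by (simp add: r_def)
      then show ?thesis using \<open>col_dot A d z jm > 0\<close> by simp
    qed
    ultimately show ?thesis by (simp add: \<tau>_def cy')
  qed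
  moreover have "jm \<notin> \<sigma>" using jm by (simp add: P_def)
  ultimately show False using mf unfolding maximal_face_def by blast
qed

lemma maximal_spanning:
  assumes mf: "maximal_face A c d n \<sigma>" and rank: "full_row_rank A d n"
    and z0: "\<forall>j\<in>\<sigma>. col_dot A d z j = 0"
  shows "\<forall>i<d. z i = 0"
proof (rule ccontr)
  assume "\<not> (\<forall>i<d. z i = 0)"
  then obtain j where j: "j < n" "col_dot A d z j \<noteq> 0"
    using rank unfolding full_row_rank_def by blast
  show False
  proof (cases "col_dot A d z j > 0")
    case True then show False using maximal_no_pos_dir[OF mf z0 j(1)] by simp
  next
    case False
    then have "col_dot A d (\<lambda>i. - z i) j > 0" using j by (simp add: col_dot_neg)
    moreover have "\<forall>j\<in>\<sigma>. col_dot A d (\<lambda>i. - z i) j = 0" using z0 by (simp add: col_dot_neg)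
    ultimately show False using maximal_no_pos_dir[OF mf _ j(1)] by blast
  qed
qed

lemma dual_point_eq:
  assumes mf: "maximal_face A c d n \<sigma>" and rank: "full_row_rank A d n"
    and y1: "\<forall>j\<in>\<sigma>. col_dot A d y j = of_int (c j)"
  shows "col_dot A d (dual_point A c d \<sigma>) j = col_dot A d y j"
proof -
  define y0 where "y0 = (\<lambda>i. if i < d then y i else 0)"
  have P0: "(\<forall>i\<ge>d. y0 i = 0) \<and> (\<forall>j\<in>\<sigma>. col_dot A d y0 j = of_int (c j))"
    using y1 by (simp add: y0_def col_dot_restrict)
  have "dual_point A c d \<sigma> = y0"
    unfolding dual_point_def
  proof (rule the_equality)
    show "(\<forall>i\<ge>d. y0 i = 0) \<and> (\<forall>j\<in>\<sigma>. col_dot A d y0 j = of_int (c j))" by (rule P0)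
  next
    fix y' assume h: "(\<forall>i\<ge>d. y' i = 0) \<and> (\<forall>j\<in>\<sigma>. col_dot A d y' j = of_int (c j))"
    have "\<forall>j\<in>\<sigma>. col_dot A d (\<lambda>i. y' i - y0 i) j = 0" using h P0 by (simp add: col_dot_diff)
    then have "\<forall>i<d. y' i - y0 i = 0" by (rule maximal_spanning[OF mf rank])
    show "y' = y0"
    proof (rule ext)
      fix i show "y' i = y0 i"
        using h P0 \<open>\<forall>i<d. y' i - y0 i = 0\<close> by (cases "i < d") auto
    qed
  qed
  then show ?thesis by (simp add: y0_def col_dot_restrict)
qed


theorem corollary3p4:
  fixes A :: "nat \<Rightarrow> nat \<Rightarrow> int" and c :: "nat \<Rightarrow> int" and d n :: nat
  assumes rank: "full_row_rank A d n"
    and pointed: "pointed_cone A d n"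
    and kernel: "\<forall>x. lp_feasible A d n (\<lambda>_. 0) x \<longrightarrow> (\<forall>j. x j = 0)"
    and lattice: "\<forall>b::nat \<Rightarrow> int. \<exists>x::nat \<Rightarrow> int. \<forall>i<d. (\<Sum>j<n. A i j * x j) = b i"
    and generic: "generic_cost A c d n"
    and tdi: "TDI A c d n"
  shows "gomory_family A c d n"
  unfolding gomory_family_def
proof
  fix b assume "b \<in> NA A d n"
  then obtain u where u: "ip_feasible A d n b u" by (auto simp: NA_def)
  have "lp_feasible A d n (\<lambda>i. real_of_int (b i)) (\<lambda>j. real (u j))"
    using u unfolding lp_feasible_def ip_feasible_def
  proof (intro conjI allI impI)
    fix i assume "(\<forall>j\<ge>n. u j = 0) \<and> (\<forall>i<d. (\<Sum>j<n. A i j * int (u j)) = b i)" "i < d"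
    then have "real_of_int (\<Sum>j<n. A i j * int (u j)) = real_of_int (b i)" by simp
    then show "(\<Sum>j<n. real_of_int (A i j) * real (u j)) = real_of_int (b i)" by simp
  qed auto
  then have "(\<lambda>i. real_of_int (b i)) \<in> coneA A d n" by (auto simp: coneA_def)
  then obtain x where opt: "lp_optimal A c d n (\<lambda>i. real_of_int (b i)) x" and xint: "\<forall>j. x j \<in> \<int>"
    using tdi by (auto simp: TDI_def)
  have feas: "lp_feasible A d n (\<lambda>i. real_of_int (b i)) x" using opt by (simp add: lp_optimal_def)
  obtain y where y1: "\<forall>j<n. col_dot A d y j \<le> of_int (c j)"
    and y2: "\<forall>j<n. x j > 0 \<longrightarrow> col_dot A d y j = of_int (c j)"
    using compl_slack[OF opt] by blast
  define \<tau> where "\<tau> = {j. j < n \<and> col_dot A d y j = of_int (c j)}"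
  have "\<tau> \<in> regular_subdivision A c d n" unfolding \<tau>_def using y1 by (rule face_of_y)
  then obtain \<sigma> where mf: "maximal_face A c d n \<sigma>" and ts: "\<tau> \<subseteq> \<sigma>"
    using exists_maximal by blast
  then obtain ys where ys1: "\<forall>j\<in>\<sigma>. col_dot A d ys j = of_int (c j)"
    and ys2: "\<forall>j\<in>{..<n} - \<sigma>. col_dot A d ys j < of_int (c j)"
    by (auto simp: maximal_face_def regular_subdivision_def)
  have rc: "reduced_cost A c d \<sigma> j > 0" if "j \<in> {..<n} - \<sigma>" for j
    using ys2 that dual_point_eq[OF mf rank ys1, of j] by (simp add: reduced_cost_def)
  define xi where "xi = (\<lambda>j. \<lfloor>x j\<rfloor>)"
  have xi_eq: "of_int (xi j) = x j" for j
    using xint[rule_format, of j] by (auto simp: xi_def elim: Ints_cases)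
  have x0: "x j = 0" if "j \<in> {..<n} - \<sigma>" for j
  proof (rule ccontr)
    assume "x j \<noteq> 0"
    then have "x j > 0" using feas that by (auto simp: lp_feasible_def order_le_less)
    then have "j \<in> \<tau>" using y2 that by (auto simp: \<tau>_def)
    then show False using ts that by auto
  qed
  have xi_nonneg: "xi j \<ge> 0" for j
  proof -
    have "x j \<ge> 0" using feas by (cases "j < n") (auto simp: lp_feasible_def)
    then show ?thesis using xi_eq[of j] by linarith
  qed
  have gf: "group_feasible A d n \<sigma> b xi"
    unfolding group_feasible_def
  proof (intro conjI allI impI ballI)
    fix j assume "n \<le> j" then show "xi j = 0" using feas by (simp add: xi_def lp_feasible_def)
  next
    fix j show "0 \<le> xi j" by (rule xi_nonneg)
  next
    fix i assume i: "i < d"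
    have "real_of_int (\<Sum>j<n. A i j * xi j) = (\<Sum>j<n. real_of_int (A i j) * x j)"
      by (simp add: xi_eq)
    also have "\<dots> = real_of_int (b i)" using feas i by (simp add: lp_feasible_def)
    finally show "(\<Sum>j<n. A i j * xi j) = b i" by linarith
  qed
  have "group_optimal A c d n \<sigma> b xi"
    unfolding group_optimal_def
  proof (intro conjI allI impI)
    show "group_feasible A d n \<sigma> b xi" by (rule gf)
  next
    fix x' assume x': "group_feasible A d n \<sigma> b x'"
    have "(\<Sum>j\<in>{..<n} - \<sigma>. reduced_cost A c d \<sigma> j * of_int (xi j)) = 0"
      using x0 xi_eq by (intro sum.neutral) (metis mult_zero_right)
    also have "0 \<le> (\<Sum>j\<in>{..<n} - \<sigma>. reduced_cost A c d \<sigma> j * of_int (x' j))"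
      using x' rc by (intro sum_nonneg) (auto simp: group_feasible_def less_imp_le)
    finally show "(\<Sum>j\<in>{..<n} - \<sigma>. reduced_cost A c d \<sigma> j * of_int (xi j))
        \<le> (\<Sum>j\<in>{..<n} - \<sigma>. reduced_cost A c d \<sigma> j * of_int (x' j))" .
  qed
  then have "group_solves A c d n \<sigma> b" using xi_nonneg by (auto simp: group_solves_def)
  then show "\<exists>\<sigma>. maximal_face A c d n \<sigma> \<and> group_solves A c d n \<sigma> b" using mf by blast
qed

end
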